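(* Let $\mathcal{X}$ be a separable infinite-dimensional complex Banach space, $T\in\mathcal{B}(\mathcal{X})$, and $\mathcal{M}$ a nontrivial closed subspace of $\mathcal{X}$. If $T$ is $\mathcal{M}$-disk transitive, then $T$ is $\mathcal{M}$-diskcyclic.
   Context: $\mathbb{N}=\{0,1,2,\dots\}$, $\mathbb{D}=\{\alpha\in\mathbb{C}:|\alpha|\le1\}$. $T$ is $\mathcal{M}$-disk transitive if for any two nonempty relatively open sets $U,V$ in $\mathcal{M}$ there exist $n\in\mathbb{N}$ and $\alpha\in\mathbb{C}$ with $|\alpha|\ge1$ such that $T^{-n}(\alpha U)\cap V$ (with $T^{-n}(A)=\{x:T^nx\in A\}$) contains a nonempty relatively open subset of $\mathcal{M}$. $T$ is $\mathcal{M}$-diskcyclic if there is $x\in\mathcal{X}$ with $\{\alpha T^nx:\alpha\in\mathbb{D},n\in\mathbb{N}\}\cap\mathcal{M}$ dense in $\mathcal{M}$. *)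

theory Defs
  imports "HOL-Analysis.Analysis"
begin

text \<open>The distribution has no class of complex vector spaces, so a complex Banach space
is modelled as a real Banach space together with a complex scalar multiplication sc
that extends the real one and is compatible with the norm.\<close>

definition complex_scaling :: "(complex \<Rightarrow> 'a::real_normed_vector \<Rightarrow> 'a) \<Rightarrow> bool" where
  "complex_scaling sc \<longleftrightarrow>
     (\<forall>a b x. sc a (sc b x) = sc (a * b) x) \<and>
     (\<forall>x. sc 1 x = x) \<and>
     (\<forall>a x y. sc a (x + y) = sc a x + sc a y) \<and>
     (\<forall>a b x. sc (a + b) x = sc a x + sc b x) \<and>
     (\<forall>r x. sc (complex_of_real r) x = r *\<^sub>R x) \<and>
     (\<forall>a x. norm (sc a x) = cmod a * norm x)"

definition cspan :: "(complex \<Rightarrow> 'a::real_normed_vector \<Rightarrow> 'a) \<Rightarrow> 'a set \<Rightarrow> 'a set" where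
  "cspan sc B = {sum (\<lambda>b. sc (c b) b) F | F c. finite F \<and> F \<subseteq> B}"

definition infinite_dimensional_c :: "(complex \<Rightarrow> 'a::real_normed_vector \<Rightarrow> 'a) \<Rightarrow> bool" where
  "infinite_dimensional_c sc \<longleftrightarrow> \<not> (\<exists>B. finite B \<and> cspan sc B = UNIV)"

definition separable_type :: "'a::metric_space itself \<Rightarrow> bool" where
  "separable_type _ \<longleftrightarrow> (\<exists>D::'a set. countable D \<and> closure D = UNIV)"

definition bounded_clinear :: "(complex \<Rightarrow> 'a::real_normed_vector \<Rightarrow> 'a) \<Rightarrow> ('a \<Rightarrow> 'a) \<Rightarrow> bool" where
  "bounded_clinear sc T \<longleftrightarrow> bounded_linear T \<and> (\<forall>c x. T (sc c x) = sc c (T x))"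

definition closed_csubspace :: "(complex \<Rightarrow> 'a::real_normed_vector \<Rightarrow> 'a) \<Rightarrow> 'a set \<Rightarrow> bool" where
  "closed_csubspace sc M \<longleftrightarrow> closed M \<and> 0 \<in> M \<and> (\<forall>x\<in>M. \<forall>y\<in>M. x + y \<in> M) \<and>
     (\<forall>c. \<forall>x\<in>M. sc c x \<in> M)"

definition M_disk_transitive ::
  "(complex \<Rightarrow> 'a::real_normed_vector \<Rightarrow> 'a) \<Rightarrow> 'a set \<Rightarrow> ('a \<Rightarrow> 'a) \<Rightarrow> bool" where
  "M_disk_transitive sc M T \<longleftrightarrow>
     (\<forall>U V. openin (top_of_set M) U \<and> U \<noteq> {} \<and> openin (top_of_set M) V \<and> V \<noteq> {} \<longrightarrow>
        (\<exists>n::nat. \<exists>\<alpha>::complex. cmod \<alpha> \<ge> 1 \<and>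
           (\<exists>W. openin (top_of_set M) W \<and> W \<noteq> {} \<and>
                W \<subseteq> (T ^^ n) -` ((\<lambda>x. sc \<alpha> x) ` U) \<inter> V)))"

definition M_diskcyclic ::
  "(complex \<Rightarrow> 'a::real_normed_vector \<Rightarrow> 'a) \<Rightarrow> 'a set \<Rightarrow> ('a \<Rightarrow> 'a) \<Rightarrow> bool" where
  "M_diskcyclic sc M T \<longleftrightarrow>
     (\<exists>x. M \<subseteq> closure ({sc \<alpha> ((T ^^ n) x) | \<alpha> n. cmod \<alpha> \<le> 1} \<inter> M))"

end

theory Submission
  imports Defs
begin

theorem mainTheorem5:
  fixes sc :: "complex \<Rightarrow> 'a::banach \<Rightarrow> 'a"
    and T :: "'a \<Rightarrow> 'a"
    and M :: "'a set"
  assumes "complex_scaling sc"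
    and "separable_type TYPE('a)"
    and "infinite_dimensional_c sc"
    and "bounded_clinear sc T"
    and "closed_csubspace sc M"
    and "M \<noteq> {0}" and "M \<noteq> UNIV"
    and "M_disk_transitive sc M T"
  shows "M_diskcyclic sc M T"
proof -
  have sc1: "\<And>a b x. sc a (sc b x) = sc (a * b) x" "\<And>x. sc 1 x = x"
    using assms(1) unfolding complex_scaling_def by auto
  have cM: "closed M" "0 \<in> M" using assms(5) unfolding closed_csubspace_def by auto
  obtain D :: "'a set" where D: "countable D" "closure D = UNIV"
    using assms(2) unfolding separable_type_def by blast
  define B where "B = (\<lambda>(d,r). M \<inter> ball d r) ` (D \<times> \<rat>) - {{}}"
  have cB: "countable B" unfolding B_def
    by (intro countable_Diff countable_image countable_SIGMA D(1) countable_rat)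
  have Bopen: "openin (top_of_set M) U \<and> U \<noteq> {}" if "U \<in> B" for U
    using that unfolding B_def by (auto intro: openin_open_Int)
  have Bbase: "\<exists>U\<in>B. U \<subseteq> V" if V: "openin (top_of_set M) V" "v \<in> V" for V v
  proof -
    obtain e where e: "e > 0" "\<And>x'. x' \<in> M \<Longrightarrow> dist x' v < e \<Longrightarrow> x' \<in> V"
      using V unfolding openin_euclidean_subtopology_iff by blast
    have "v \<in> closure D" using D(2) by simp
    then obtain d where d: "d \<in> D" "dist d v < e/3"
    proof -
      have "e/3 > 0" using e(1) by simp
      then show ?thesis using \<open>v \<in> closure D\<close> that unfolding closure_approachable by blast
    qed
    obtain r where r: "r \<in> \<rat>" "e/3 < r" "r < e/2"
      using Rats_dense_in_real[of "e/3" "e/2"] e(1) by auto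
    have vM: "v \<in> M" using V openin_subset by fastforce
    have "M \<inter> ball d r \<subseteq> V"
    proof
      fix x assume x: "x \<in> M \<inter> ball d r"
      have "dist x v \<le> dist x d + dist d v" by (rule dist_triangle)
      also have "\<dots> < e" using x d r by (simp add: dist_commute)
      finally show "x \<in> V" using e x by auto
    qed
    moreover have "v \<in> M \<inter> ball d r" using vM d r by (simp add: dist_commute)
    ultimately show ?thesis unfolding B_def using d r by blast
  qed
  define G where "G U = \<Union>{W. openin (top_of_set M) W \<and>
      (\<exists>n \<alpha>. cmod \<alpha> \<ge> 1 \<and> W \<subseteq> (T ^^ n) -` (sc \<alpha> ` U))}" for U
  have Gopen: "openin (top_of_set M) (G U)" for U
    unfolding G_def by (rule openin_Union) auto
  have Gdense: "top_of_set M closure_of G U = topspace (top_of_set M)" if UB: "U \<in> B" for U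
    unfolding dense_intersects_open
  proof (intro allI impI)
    fix V assume V: "openin (top_of_set M) V \<and> V \<noteq> {}"
    obtain n \<alpha> W where W: "cmod \<alpha> \<ge> 1" "openin (top_of_set M) W" "W \<noteq> {}"
       "W \<subseteq> (T ^^ n) -` ((\<lambda>x. sc \<alpha> x) ` U) \<inter> V"
    proof -
      have "openin (top_of_set M) U \<and> U \<noteq> {}" using Bopen[OF UB] .
      then show ?thesis using assms(8) V that unfolding M_disk_transitive_def by blast
    qed
    have "W \<subseteq> G U" unfolding G_def using W by blast
    then show "G U \<inter> V \<noteq> {}" using W by blast
  qed
  have cM': "closedin euclidean M" using cM(1) by simp
  have cm: "completely_metrizable_space (top_of_set M)"
    using completely_metrizable_space_closedin[OF completely_metrizable_space_euclidean cM'] .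
  have "top_of_set M closure_of \<Inter>(G ` B) = topspace (top_of_set M)"
    by (rule Baire_category) (use cm cB Gopen Gdense in auto)
  then have "\<Inter>(G ` B) \<noteq> {}" using cM(2) by auto
  then obtain x where x: "\<And>U. U \<in> B \<Longrightarrow> x \<in> G U" by blast
  let ?S = "{sc \<alpha> ((T ^^ n) x) | \<alpha> n. cmod \<alpha> \<le> 1}"
  have "M \<subseteq> closure (?S \<inter> M)"
  proof
    fix y assume y: "y \<in> M"
    show "y \<in> closure (?S \<inter> M)"
      unfolding closure_approachable
    proof (intro allI impI)
      fix e :: real assume e: "e > 0"
      have "openin (top_of_set M) (M \<inter> ball y e)" by (auto intro: openin_open_Int)
      then obtain U where U: "U \<in> B" "U \<subseteq> M \<inter> ball y e"
        using Bbase[of "M \<inter> ball y e" y] y e by auto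
      from x[OF U(1)] obtain W n \<alpha> where "x \<in> W" "cmod \<alpha> \<ge> 1"
        "W \<subseteq> (T ^^ n) -` (sc \<alpha> ` U)" unfolding G_def by blast
      then obtain u where u: "u \<in> U" "(T ^^ n) x = sc \<alpha> u" by blast
      have a0: "\<alpha> \<noteq> 0" using \<open>cmod \<alpha> \<ge> 1\<close> by auto
      have "sc (1/\<alpha>) ((T ^^ n) x) = u" using u a0 sc1 by simp
      moreover have "cmod (1/\<alpha>) \<le> 1" using \<open>cmod \<alpha> \<ge> 1\<close>
        by (simp add: norm_divide divide_le_eq_1)
      ultimately have "u \<in> ?S" by blast
      moreover have "u \<in> M" "dist u y < e" using U u by (auto simp: dist_commute)
      ultimately show "\<exists>z\<in>?S \<inter> M. dist z y < e" by blast
    qed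
  qed
  then show ?thesis unfolding M_diskcyclic_def by blast
qed

end
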